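(* Let $Q$ be a convex polytope in $\mathbb{R}^D$ that is not locally point symmetric. Then there is a vertex $\mathbf{v}$ and an edge $E$ of $Q$ such that, for all $\mathbf{e}\in E$, the difference vectors $\mathbf{k} = \mathbf{e}-\mathbf{v}$ and $-\mathbf{k}$ are uniquely formed in $Q-Q$.
   Context: For a set $S\subset\mathbb{R}^D$, a vector $\mathbf{k}\in S-S=\{\mathbf{s}_1-\mathbf{s}_2:\mathbf{s}_1,\mathbf{s}_2\in S\}$ is uniquely formed if there exists a unique pair $\mathbf{s}_1,\mathbf{s}_2\in S$ with $\mathbf{s}_1-\mathbf{s}_2=\mathbf{k}$. Two vertices $\mathbf{u},\mathbf{v}$ of a convex polytope $Q$ are strictly antipodal if there exist parallel supporting hyperplanes $H_1,H_2$ of $Q$ with $H_1\cap Q=\{\mathbf{u}\}$ and $H_2 \cap Q = \{\mathbf{v}\}$. The supporting cone of $Q$ at a vertex $\mathbf{v}$ is $C(\mathbf{v}) = \mathbf{v} + \bigcup_{\lambda \ge 0}\lambda(Q - \mathbf{v})$. A convex polytope $Q$ with $m$ vertices is locally point symmetric if its vertices can be partitioned into $m/2$ pairs of strictly antipodal vertices such that for each pair $\{\mathbf{u},\mathbf{v}\}$, $C(\mathbf{u}) - \mathbf{u} = \mathbf{v} - C(\mathbf{v})$. *)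

theory Defs
  imports "HOL-Analysis.Analysis" "HOL-Library.Disjoint_Sets"
begin

definition vertices :: "'a::euclidean_space set \<Rightarrow> 'a set" where
  "vertices Q = {v. v extreme_point_of Q}"

definition is_edge :: "'a::euclidean_space set \<Rightarrow> 'a set \<Rightarrow> bool" where
  "is_edge Q E \<longleftrightarrow> E face_of Q \<and> aff_dim E = 1"

definition supporting_hyperplane :: "'a::euclidean_space set \<Rightarrow> 'a \<Rightarrow> real \<Rightarrow> bool" where
  "supporting_hyperplane Q a b \<longleftrightarrow> a \<noteq> 0 \<and> {x. a \<bullet> x = b} \<inter> Q \<noteq> {} \<and>
     ((\<forall>x\<in>Q. a \<bullet> x \<le> b) \<or> (\<forall>x\<in>Q. a \<bullet> x \<ge> b))"

definition strictly_antipodal :: "'a::euclidean_space set \<Rightarrow> 'a \<Rightarrow> 'a \<Rightarrow> bool" where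
  "strictly_antipodal Q u v \<longleftrightarrow>
     u \<in> vertices Q \<and> v \<in> vertices Q \<and>
     (\<exists>a b1 b2. supporting_hyperplane Q a b1 \<and> supporting_hyperplane Q a b2 \<and>
        {x. a \<bullet> x = b1} \<inter> Q = {u} \<and> {x. a \<bullet> x = b2} \<inter> Q = {v})"

definition supporting_cone :: "'a::euclidean_space set \<Rightarrow> 'a \<Rightarrow> 'a set" where
  "supporting_cone Q v = {v + l *\<^sub>R (q - v) | l q. l \<ge> 0 \<and> q \<in> Q}"

definition locally_point_symmetric :: "'a::euclidean_space set \<Rightarrow> bool" where
  "locally_point_symmetric Q \<longleftrightarrow>
     (\<exists>P. partition_on (vertices Q) P \<and>
        (\<forall>p\<in>P. \<exists>u v. p = {u, v} \<and> u \<noteq> v \<and> strictly_antipodal Q u v \<and>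
            (\<lambda>c. c - u) ` supporting_cone Q u = (\<lambda>c. v - c) ` supporting_cone Q v))"

definition uniquely_formed :: "'a::ab_group_add set \<Rightarrow> 'a \<Rightarrow> bool" where
  "uniquely_formed S k \<longleftrightarrow> (\<exists>!p. fst p \<in> S \<and> snd p \<in> S \<and> fst p - snd p = k)"

end

theory Submission
  imports Defs
begin

definition Mx :: "'a::euclidean_space set \<Rightarrow> 'a \<Rightarrow> 'a set" where
  "Mx Q a = {x\<in>Q. \<forall>y\<in>Q. a \<bullet> y \<le> a \<bullet> x}"

lemma edge_exists:
  fixes P :: "'a::euclidean_space set"
  shows "polytope P \<Longrightarrow> 1 \<le> aff_dim P \<Longrightarrow> \<exists>E. E face_of P \<and> aff_dim E = 1"
proof (induction "nat (aff_dim P)" arbitrary: P rule: less_induct)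
  case (less P)
  show ?case
  proof (cases "aff_dim P = 1")
    case True then show ?thesis using face_of_refl polytope_imp_convex less by blast
  next
    case False
    then have "0 < aff_dim P" using less by auto
    then obtain F where F: "F facet_of P" using polytope_facet_exists less.prems by blast
    have pF: "polytope F" using F face_of_polytope_polytope facet_of_imp_face_of less by blast
    have dF: "aff_dim F = aff_dim P - 1" using F facet_of_def by blast
    then have "nat (aff_dim F) < nat (aff_dim P)" "1 \<le> aff_dim F" using False less.prems by auto
    then obtain E where "E face_of F" "aff_dim E = 1" using less.hyps[of F] pF by blast
    then show ?thesis using face_of_trans F facet_of_imp_face_of by blast
  qed
qed

lemma Mx_eq: "x0 \<in> Mx Q a \<Longrightarrow> Mx Q a = Q \<inter> {x. a \<bullet> x = a \<bullet> x0}"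
  unfolding Mx_def by (auto intro: order_antisym)

lemma Mx_face: "convex Q \<Longrightarrow> x0 \<in> Mx Q a \<Longrightarrow> Mx Q a face_of Q"
  apply (subst Mx_eq, assumption)
  apply (rule face_of_Int_supporting_hyperplane_le)
  apply (auto simp: Mx_def)
  done

lemma Mx_nonempty:
  fixes Q :: "'a::euclidean_space set"
  shows "compact Q \<Longrightarrow> Q \<noteq> {} \<Longrightarrow> Mx Q a \<noteq> {}"
proof -
  assume "compact Q" "Q \<noteq> {}"
  moreover have "continuous_on Q (\<lambda>x. a \<bullet> x)" by (intro continuous_intros)
  ultimately show ?thesis using continuous_attains_sup[of Q "\<lambda>x. a \<bullet> x"] unfolding Mx_def by auto
qed

lemma Mx_strict: "Mx Q a = {u} \<Longrightarrow> x \<in> Q \<Longrightarrow> x \<noteq> u \<Longrightarrow> a \<bullet> x < a \<bullet> u"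
proof -
  assume a: "Mx Q a = {u}" "x \<in> Q" "x \<noteq> u"
  then have "x \<notin> Mx Q a" by auto
  then have "\<exists>y\<in>Q. a \<bullet> y > a \<bullet> x" using a(2) unfolding Mx_def by (auto simp: not_le)
  then obtain y where "y \<in> Q" "a \<bullet> y > a \<bullet> x" by auto
  moreover have "u \<in> Mx Q a" using a by auto
  ultimately show ?thesis unfolding Mx_def by force
qed

lemma Mx_plane: "Mx Q a = {u} \<Longrightarrow> {x. a \<bullet> x = a \<bullet> u} \<inter> Q = {u}"
  using Mx_eq[of u Q a] by auto

lemma uf_lemma:
  assumes e: "e \<in> Mx Q c" and w: "Mx Q (-c) = {w}"
  shows "uniquely_formed Q (e - w) \<and> uniquely_formed Q (- (e - w))"
proof -
  have eQ: "e \<in> Q" and eM: "\<And>y. y \<in> Q \<Longrightarrow> c \<bullet> y \<le> c \<bullet> e" using e unfolding Mx_def by auto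
  have wQ: "w \<in> Q" and wM: "\<And>y. y \<in> Q \<Longrightarrow> c \<bullet> w \<le> c \<bullet> y" using w unfolding Mx_def by auto
  have key: "x = e \<and> y = w" if "x \<in> Q" "y \<in> Q" "x - y = e - w" for x y
  proof -
    have "c \<bullet> x - c \<bullet> y = c \<bullet> e - c \<bullet> w" using that by (metis inner_diff_right)
    then have "c \<bullet> y = c \<bullet> w" using eM[OF that(1)] wM[OF that(2)] by linarith
    then have "y \<in> Mx Q (-c)" using that wM unfolding Mx_def by auto
    then have "y = w" using w by auto
    then show ?thesis using that by (simp add: algebra_simps)
  qed
  show ?thesis unfolding uniquely_formed_def
  proof
    show "\<exists>!p. fst p \<in> Q \<and> snd p \<in> Q \<and> fst p - snd p = e - w"
      apply (rule ex1I[of _ "(e, w)"]) using eQ wQ key by auto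
    show "\<exists>!p. fst p \<in> Q \<and> snd p \<in> Q \<and> fst p - snd p = - (e - w)"
      apply (rule ex1I[of _ "(w, e)"]) using eQ wQ key
      by (auto simp: algebra_simps)
  qed
qed


lemma path_const:
  fixes Q :: "'a::euclidean_space set"
  assumes H: "\<And>c w. Mx Q (-c) = {w} \<Longrightarrow> \<exists>z. Mx Q c = {z}"
    and fin: "finite V" and V: "\<And>c z. Mx Q c = {z} \<Longrightarrow> z \<in> V" and VQ: "V \<subseteq> Q"
    and a: "Mx Q a = {u}" and b: "Mx Q b = {u}" and w0: "Mx Q (-a) = {w0}"
  shows "Mx Q (-b) = {w0}"
proof -
  define c where "c t = (1 - t) *\<^sub>R a + t *\<^sub>R b" for t::real
  have uQ: "u \<in> Q" using a Mx_def by auto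
  have cu: "Mx Q (c t) = {u}" if t: "t \<in> {0..1}" for t
  proof -
    have le: "c t \<bullet> y \<le> c t \<bullet> u" if "y \<in> Q" for y
    proof -
      have "a \<bullet> y \<le> a \<bullet> u" "b \<bullet> y \<le> b \<bullet> u" using a b that unfolding Mx_def by auto
      then have "(1 - t) * (a \<bullet> y) \<le> (1 - t) * (a \<bullet> u)" "t * (b \<bullet> y) \<le> t * (b \<bullet> u)"
        using t by (auto intro: mult_left_mono)
      then show ?thesis unfolding c_def by (simp add: inner_add_left)
    qed
    have lt: "c t \<bullet> y < c t \<bullet> u" if "y \<in> Q" "y \<noteq> u" for y
    proof -
      have "a \<bullet> y < a \<bullet> u" "b \<bullet> y < b \<bullet> u" using Mx_strict[OF a] Mx_strict[OF b] that by auto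
      then have "(1 - t) * (a \<bullet> y) + t * (b \<bullet> y) < (1 - t) * (a \<bullet> u) + t * (b \<bullet> u)"
        using t by (cases "t = 0") (auto intro!: add_less_le_mono add_le_less_mono mult_strict_left_mono mult_left_mono)
      then show ?thesis unfolding c_def by (simp add: inner_add_left)
    qed
    show ?thesis unfolding Mx_def using le lt uQ by force
  qed
  have sing: "\<exists>z. Mx Q (-(c t)) = {z}" if "t \<in> {0..1}" for t
    using H[of "- c t"] cu[OF that] by simp
  define S where "S w = {t. \<forall>x\<in>Q. c t \<bullet> w \<le> c t \<bullet> x}" for w
  have memS: "t \<in> S w \<longleftrightarrow> Mx Q (-(c t)) = {w}" if "t \<in> {0..1}" "w \<in> V" for t w
  proof
    assume "t \<in> S w"
    then have "w \<in> Mx Q (-(c t))" using that VQ unfolding S_def Mx_def by auto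
    then show "Mx Q (-(c t)) = {w}" using sing[OF that(1)] by auto
  next
    assume "Mx Q (-(c t)) = {w}"
    then have "w \<in> Mx Q (-(c t))" by auto
    then show "t \<in> S w" unfolding S_def Mx_def by auto
  qed
  have closedS: "closed (S w)" for w
  proof -
    have "S w = (\<Inter>x\<in>Q. {t. c t \<bullet> w \<le> c t \<bullet> x})" unfolding S_def by auto
    moreover have "closed {t. c t \<bullet> w \<le> c t \<bullet> x}" for x
      unfolding c_def by (intro closed_Collect_le continuous_intros)
    ultimately show ?thesis by auto
  qed
  have w0V: "w0 \<in> V" using V w0 by blast
  define A where "A = S w0"
  define B where "B = (\<Union>w\<in>V-{w0}. S w)"
  have cA: "closed A" unfolding A_def using closedS by auto
  have cB: "closed B" unfolding B_def using closedS fin by (intro closed_UN) auto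
  have cover: "{0..1} \<subseteq> A \<union> B"
  proof
    fix t :: real assume t: "t \<in> {0..1}"
    then obtain z where z: "Mx Q (-(c t)) = {z}" using sing by blast
    then have "z \<in> V" using V by blast
    then have "t \<in> S z" using memS t z by blast
    then show "t \<in> A \<union> B" unfolding A_def B_def using \<open>z \<in> V\<close> by (cases "z = w0") auto
  qed
  have disj: "A \<inter> B \<inter> {0..1} = {}"
  proof (rule ccontr)
    assume "A \<inter> B \<inter> {0..1} \<noteq> {}"
    then obtain t where t0: "t \<in> A" "t \<in> B" "t \<in> {0..1}" by blast
    then obtain w where "w \<in> V - {w0}" "t \<in> S w" unfolding B_def by blast
    then have t: "t \<in> {0..1}" "t \<in> S w0" "w \<in> V" "w \<noteq> w0" "t \<in> S w"
      using t0(1,3) unfolding A_def by simp_all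
    have e1: "Mx Q (-(c t)) = {w0}" using memS[OF t(1) w0V] t(2) by blast
    have e2: "Mx Q (-(c t)) = {w}" using memS[OF t(1) t(3)] t(5) by blast
    from e1 e2 t(4) show False by simp
  qed
  have "A \<inter> {0..1} = {} \<or> B \<inter> {0..1} = {}"
    by (rule connected_closedD[OF connected_Icc disj cover cA cB])
  moreover have "0 \<in> A" unfolding A_def using memS[of 0 w0] w0 w0V by (simp add: c_def)
  ultimately have "B \<inter> {0..1} = {}" by auto
  moreover have "(1::real) \<in> A \<union> B" by (rule subsetD[OF cover]) simp
  ultimately have "1 \<in> A" by auto
  then show ?thesis unfolding A_def using memS[of 1 w0] w0V by (simp add: c_def)
qed

lemma cone_incl:
  fixes Q :: "'a::euclidean_space set"
  assumes pQ: "polytope Q" and b0: "Mx Q (-b0) = {v}"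
    and H: "\<And>c. Mx Q (-c) = {v} \<Longrightarrow> Mx Q c = {u}" and q0: "q0 \<in> Q" and l0: "l0 \<ge> 0"
  shows "\<exists>l q. l \<ge> 0 \<and> q \<in> Q \<and> l0 *\<^sub>R (q0 - u) = l *\<^sub>R (v - q)"
proof (rule ccontr)
  assume nex: "\<not> ?thesis"
  define K where "K = conic hull ((\<lambda>q. v - q) ` Q)"
  have Keq: "K = {l *\<^sub>R (v - q) | l q. l \<ge> 0 \<and> q \<in> Q}"
    unfolding K_def conic_hull_explicit by auto
  define d where "d = l0 *\<^sub>R (q0 - u)"
  have dK: "d \<notin> K" using nex unfolding Keq d_def by auto
  have img: "(\<lambda>q. v - q) ` Q = (+) v ` ((\<lambda>x. (-1) *\<^sub>R x) ` Q)" by (auto simp: image_image)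
  have pimg: "polytope ((\<lambda>q. v - q) ` Q)"
    unfolding img polytope_translation_eq using polytope_scaling[OF pQ] .
  have clK: "closed K" unfolding K_def using closed_conic_hull_strong pimg by blast
  have cvK: "convex K" unfolding K_def using convex_conic_hull polytope_imp_convex pimg by blast
  obtain a' \<beta> where sep: "a' \<bullet> d < \<beta>" "\<forall>x\<in>K. \<beta> < a' \<bullet> x"
    using separating_hyperplane_closed_point[OF cvK clK dK] by blast
  have "0 \<in> K" unfolding Keq using q0 by force
  then have \<beta>: "\<beta> < 0" using sep by auto
  have nn: "a' \<bullet> (v - q) \<ge> 0" if q: "q \<in> Q" for q
  proof (rule ccontr)
    assume "\<not> ?thesis"
    then have s: "a' \<bullet> (v - q) < 0" by simp
    define lam where "lam = \<beta> / (a' \<bullet> (v - q))"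
    have "lam \<ge> 0" unfolding lam_def using s \<beta> by (simp add: divide_nonpos_neg)
    then have "lam *\<^sub>R (v - q) \<in> K" unfolding Keq using q by blast
    then have "\<beta> < lam * (a' \<bullet> (v - q))" using sep by auto
    also have "\<dots> = \<beta>" unfolding lam_def using s by simp
    finally show False by simp
  qed
  define a where "a = - a'"
  have av: "a \<bullet> v \<le> a \<bullet> q" if "q \<in> Q" for q
    using nn[OF that] unfolding a_def by (simp add: inner_diff_right)
  have "a \<bullet> d > 0" unfolding a_def using sep \<beta> by simp
  then have "l0 * (a \<bullet> (q0 - u)) > 0" unfolding d_def by simp
  then have \<delta>: "a \<bullet> (q0 - u) > 0" using l0 by (simp add: zero_less_mult_iff)
  define \<delta> where "\<delta> = a \<bullet> (q0 - u)"
  define \<epsilon> where "\<epsilon> = \<delta> / (\<bar>b0 \<bullet> (q0 - u)\<bar> + 1)"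
  have \<epsilon>pos: "\<epsilon> > 0" unfolding \<epsilon>_def \<delta>_def using \<delta> by simp
  have \<epsilon>small: "\<epsilon> * \<bar>b0 \<bullet> (q0 - u)\<bar> < \<delta>"
  proof -
    have "\<epsilon> * \<bar>b0 \<bullet> (q0 - u)\<bar> < \<epsilon> * (\<bar>b0 \<bullet> (q0 - u)\<bar> + 1)" using \<epsilon>pos by simp
    also have "\<dots> = \<delta>" unfolding \<epsilon>_def by simp
    finally show ?thesis .
  qed
  define c where "c = a + \<epsilon> *\<^sub>R b0"
  have vQ: "v \<in> Q" using b0 unfolding Mx_def by auto
  have b0le: "b0 \<bullet> v \<le> b0 \<bullet> y" if "y \<in> Q" for y using b0 that unfolding Mx_def by auto
  have b0lt: "b0 \<bullet> v < b0 \<bullet> y" if "y \<in> Q" "y \<noteq> v" for y using Mx_strict[OF b0 that] by simp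
  have "Mx Q (-c) = {v}"
  proof -
    have "c \<bullet> v \<le> c \<bullet> y" if "y \<in> Q" for y
      using av[OF that] b0le[OF that] \<epsilon>pos unfolding c_def
      by (simp add: inner_add_left add_mono mult_left_mono)
    moreover have "c \<bullet> v < c \<bullet> y" if "y \<in> Q" "y \<noteq> v" for y
      using av[OF that(1)] b0lt[OF that] \<epsilon>pos unfolding c_def
      by (simp add: inner_add_left add_le_less_mono mult_strict_left_mono)
    ultimately show ?thesis unfolding Mx_def using vQ by force
  qed
  then have "Mx Q c = {u}" by (rule H)
  then have "c \<bullet> q0 \<le> c \<bullet> u" using q0 unfolding Mx_def by auto
  moreover have "c \<bullet> q0 = a \<bullet> q0 + \<epsilon> * (b0 \<bullet> q0)" "c \<bullet> u = a \<bullet> u + \<epsilon> * (b0 \<bullet> u)"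
    unfolding c_def by (simp_all add: inner_add_left)
  moreover have "a \<bullet> (q0 - u) = a \<bullet> q0 - a \<bullet> u" "b0 \<bullet> (q0 - u) = b0 \<bullet> q0 - b0 \<bullet> u"
    by (simp_all add: inner_diff_right)
  moreover have "\<epsilon> * (b0 \<bullet> q0 - b0 \<bullet> u) = \<epsilon> * (b0 \<bullet> q0) - \<epsilon> * (b0 \<bullet> u)"
    by (rule right_diff_distrib)
  ultimately have "a \<bullet> (q0 - u) + \<epsilon> * (b0 \<bullet> (q0 - u)) \<le> 0"
    unfolding inner_diff_right right_diff_distrib by linarith
  moreover have "\<epsilon> * (- (b0 \<bullet> (q0 - u))) \<le> \<epsilon> * \<bar>b0 \<bullet> (q0 - u)\<bar>"
    using \<epsilon>pos by (intro mult_left_mono) auto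
  ultimately show False using \<epsilon>small unfolding \<delta>_def by linarith
qed


theorem lemma7:
  fixes Q :: "'a::euclidean_space set"
  assumes "polytope Q"
    and "\<exists>x\<in>Q. \<exists>y\<in>Q. x \<noteq> y"
    and "\<not> locally_point_symmetric Q"
  shows "\<exists>v E. v \<in> vertices Q \<and> is_edge Q E \<and>
           (\<forall>e\<in>E. uniquely_formed Q (e - v) \<and> uniquely_formed Q (- (e - v)))"
proof (rule ccontr)
  assume NC: "\<not> ?thesis"
  note pQ = assms(1)
  have cQ: "compact Q" and cvQ: "convex Q" using pQ polytope_imp_compact polytope_imp_convex by auto
  obtain x1 x2 where x12: "x1 \<in> Q" "x2 \<in> Q" "x1 \<noteq> x2" using assms(2) by blast
  have Qne: "Q \<noteq> {}" using x12 by auto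
  define V where "V = vertices Q"
  have finV: "finite V" unfolding V_def vertices_def
    using finite_polyhedron_extreme_points polytope_imp_polyhedron pQ by blast
  have VQ: "V \<subseteq> Q" unfolding V_def vertices_def extreme_point_of_def by auto
  have singV: "z \<in> V" if "Mx Q c = {z}" for c z
  proof -
    have "{z} face_of Q" using Mx_face[OF cvQ, of z c] that by auto
    then show ?thesis unfolding V_def vertices_def using face_of_singleton by blast
  qed
  have H: "\<exists>z. Mx Q c = {z}" if w: "Mx Q (-c) = {w}" for c w
  proof (rule ccontr)
    assume ns: "\<nexists>z. Mx Q c = {z}"
    obtain y0 where y0: "y0 \<in> Mx Q c" using Mx_nonempty[OF cQ Qne] by blast
    then obtain y1 where y1: "y1 \<in> Mx Q c" "y1 \<noteq> y0" using ns by blast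
    have fM: "Mx Q c face_of Q" using Mx_face[OF cvQ y0] .
    have pM: "polytope (Mx Q c)" using face_of_polytope_polytope[OF pQ fM] .
    have "aff_dim (Mx Q c) \<noteq> 0" using ns aff_dim_eq_0 by blast
    moreover have "aff_dim (Mx Q c) \<noteq> -1" using y0 aff_dim_empty[of "Mx Q c"] by auto
    moreover have "aff_dim (Mx Q c) \<ge> -1" by (rule aff_dim_geq)
    ultimately have "1 \<le> aff_dim (Mx Q c)" by linarith
    then obtain E where E: "E face_of Mx Q c" "aff_dim E = 1" using edge_exists[OF pM] by blast
    have eE: "is_edge Q E" unfolding is_edge_def using E face_of_trans fM by blast
    have wV: "w \<in> vertices Q" using singV[OF w] V_def by simp
    have "\<forall>e\<in>E. uniquely_formed Q (e - w) \<and> uniquely_formed Q (- (e - w))"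
      using uf_lemma[OF _ w] face_of_imp_subset[OF E(1)] by blast
    then show False using NC eE wV by blast
  qed
  have expo: "\<exists>a. Mx Q a = {u}" if "u \<in> V" for u
  proof -
    have "{u} face_of Q" using that face_of_singleton unfolding V_def vertices_def by blast
    then have "{u} exposed_face_of Q"
      using exposed_face_of_polyhedron polytope_imp_polyhedron pQ by blast
    then obtain a b where ab: "Q \<subseteq> {x. a \<bullet> x \<le> b}" "{u} = Q \<inter> {x. a \<bullet> x = b}"
      unfolding exposed_face_of_def by blast
    have "Mx Q a = {u}"
    proof -
      have uQ: "u \<in> Q" "a \<bullet> u = b" using ab by auto
      have "u \<in> Mx Q a" using ab uQ unfolding Mx_def by auto
      moreover have "x = u" if "x \<in> Mx Q a" for x
      proof -
        have "x \<in> Q" "a \<bullet> u \<le> a \<bullet> x" using that uQ unfolding Mx_def by auto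
        then have "a \<bullet> x = b" using ab uQ by fastforce
        then show ?thesis using ab \<open>x \<in> Q\<close> by blast
      qed
      ultimately show ?thesis by blast
    qed
    then show ?thesis by blast
  qed
  obtain A where A: "\<And>u. u \<in> V \<Longrightarrow> Mx Q (A u) = {u}" using expo by metis
  have "\<exists>w. Mx Q (- A u) = {w}" if "u \<in> V" for u
    using H[of "- A u"] A[OF that] by simp
  then obtain \<sigma> where \<sigma>: "\<And>u. u \<in> V \<Longrightarrow> Mx Q (- A u) = {\<sigma> u}" by metis
  have P: "Mx Q (-c) = {\<sigma> u}" if "u \<in> V" "Mx Q c = {u}" for u c
    by (rule path_const[OF H finV singV VQ A[OF that(1)] that(2) \<sigma>[OF that(1)]]) auto
  have \<sigma>V: "\<sigma> u \<in> V" if "u \<in> V" for u using singV \<sigma>[OF that] by blast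
  have \<sigma>\<sigma>: "\<sigma> (\<sigma> u) = u" if "u \<in> V" for u
  proof -
    have "Mx Q (- (- A u)) = {\<sigma> (\<sigma> u)}" using P[OF \<sigma>V[OF that] \<sigma>[OF that]] .
    then show ?thesis using A[OF that] by simp
  qed
  have two: "\<not> Q \<subseteq> {u}" for u using x12 by auto
  have \<sigma>ne: "\<sigma> u \<noteq> u" if "u \<in> V" for u
  proof
    assume eq: "\<sigma> u = u"
    have "Q \<subseteq> {u}"
    proof
      fix x assume x: "x \<in> Q"
      have "A u \<bullet> x \<le> A u \<bullet> u" using A[OF that] x unfolding Mx_def by auto
      moreover have "- A u \<bullet> x \<le> - A u \<bullet> u" using \<sigma>[OF that] eq x unfolding Mx_def by auto
      ultimately have "A u \<bullet> x = A u \<bullet> u" by simp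
      moreover have "\<forall>y\<in>Q. A u \<bullet> y \<le> A u \<bullet> u"
        using A[OF that] unfolding Mx_def by blast
      ultimately have "x \<in> Mx Q (A u)" using x unfolding Mx_def by auto
      then show "x \<in> {u}" using A[OF that] by simp
    qed
    then show False using two by blast
  qed
  have cone: "(\<lambda>c. c - u) ` supporting_cone Q u = (\<lambda>c. \<sigma> u - c) ` supporting_cone Q (\<sigma> u)"
    if u: "u \<in> V" for u
  proof -
    define v where "v = \<sigma> u"
    have vV: "v \<in> V" unfolding v_def using \<sigma>V u .
    have L: "(\<lambda>c. c - u) ` supporting_cone Q u = {l *\<^sub>R (q - u) | l q. l \<ge> 0 \<and> q \<in> Q}"
    proof (intro equalityI subsetI)
      fix x assume "x \<in> (\<lambda>c. c - u) ` supporting_cone Q u"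
      then show "x \<in> {l *\<^sub>R (q - u) | l q. l \<ge> 0 \<and> q \<in> Q}" unfolding supporting_cone_def by fastforce
    next
      fix x assume "x \<in> {l *\<^sub>R (q - u) | l q. l \<ge> 0 \<and> q \<in> Q}"
      then obtain l q where lq: "x = l *\<^sub>R (q - u)" "l \<ge> 0" "q \<in> Q" by blast
      then have "u + l *\<^sub>R (q - u) \<in> supporting_cone Q u" unfolding supporting_cone_def by blast
      then show "x \<in> (\<lambda>c. c - u) ` supporting_cone Q u"
        by (rule image_eqI[rotated]) (simp add: lq)
    qed
    have R: "(\<lambda>c. v - c) ` supporting_cone Q v = {l *\<^sub>R (v - q) | l q. l \<ge> 0 \<and> q \<in> Q}"
    proof (intro equalityI subsetI)
      fix x assume "x \<in> (\<lambda>c. v - c) ` supporting_cone Q v"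
      then obtain l q where lq: "x = v - (v + l *\<^sub>R (q - v))" "l \<ge> 0" "q \<in> Q"
        unfolding supporting_cone_def by blast
      then have "x = l *\<^sub>R (v - q)" by (simp add: algebra_simps)
      then show "x \<in> {l *\<^sub>R (v - q) | l q. l \<ge> 0 \<and> q \<in> Q}" using lq by blast
    next
      fix x assume "x \<in> {l *\<^sub>R (v - q) | l q. l \<ge> 0 \<and> q \<in> Q}"
      then obtain l q where lq: "x = l *\<^sub>R (v - q)" "l \<ge> 0" "q \<in> Q" by blast
      then have "v + l *\<^sub>R (q - v) \<in> supporting_cone Q v" unfolding supporting_cone_def by blast
      then show "x \<in> (\<lambda>c. v - c) ` supporting_cone Q v"
        by (rule image_eqI[rotated]) (simp add: lq algebra_simps)
    qed
    obtain b0 where b0: "Mx Q (- b0) = {v}" using A[OF vV] by (metis minus_minus)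
    obtain b1 where b1: "Mx Q (- b1) = {u}" using A[OF u] by (metis minus_minus)
    have Hv: "Mx Q c = {u}" if "Mx Q (-c) = {v}" for c
      using P[OF vV that] \<sigma>\<sigma>[OF u] unfolding v_def by simp
    have Hu: "Mx Q c = {v}" if "Mx Q (-c) = {u}" for c
      using P[OF u that] unfolding v_def by simp
    have "{l *\<^sub>R (q - u) | l q. l \<ge> 0 \<and> q \<in> Q} = {l *\<^sub>R (v - q) | l q. l \<ge> 0 \<and> q \<in> Q}"
    proof (intro equalityI subsetI)
      fix x assume "x \<in> {l *\<^sub>R (q - u) | l q. l \<ge> 0 \<and> q \<in> Q}"
      then obtain l q where x: "x = l *\<^sub>R (q - u)" "l \<ge> 0" "q \<in> Q" by blast
      then show "x \<in> {l *\<^sub>R (v - q) | l q. l \<ge> 0 \<and> q \<in> Q}"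
        using cone_incl[OF pQ b0 Hv x(3) x(2)] by auto
    next
      fix x assume "x \<in> {l *\<^sub>R (v - q) | l q. l \<ge> 0 \<and> q \<in> Q}"
      then obtain l q where x: "x = l *\<^sub>R (v - q)" "l \<ge> 0" "q \<in> Q" by blast
      obtain l' q' where "l' \<ge> 0" "q' \<in> Q" "l *\<^sub>R (q - v) = l' *\<^sub>R (u - q')"
        using cone_incl[OF pQ b1 Hu x(3) x(2)] by blast
      then have "x = l' *\<^sub>R (q' - u)" unfolding x(1)
        by (metis minus_diff_eq scaleR_minus_right)
      then show "x \<in> {l *\<^sub>R (q - u) | l q. l \<ge> 0 \<and> q \<in> Q}" using \<open>l' \<ge> 0\<close> \<open>q' \<in> Q\<close> by blast
    qed
    then show ?thesis using L R unfolding v_def by simp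
  qed
  have anti: "strictly_antipodal Q u (\<sigma> u)" if u: "u \<in> V" for u
  proof -
    define a where "a = A u"
    have Ma: "Mx Q a = {u}" and Mma: "Mx Q (-a) = {\<sigma> u}" using A[OF u] \<sigma>[OF u] a_def by auto
    have a0: "a \<noteq> 0"
    proof
      assume "a = 0"
      then have "Mx Q a = Q" unfolding Mx_def by auto
      then show False using Ma two by auto
    qed
    have p1: "{x. a \<bullet> x = a \<bullet> u} \<inter> Q = {u}" using Mx_plane[OF Ma] .
    have p2: "{x. a \<bullet> x = a \<bullet> \<sigma> u} \<inter> Q = {\<sigma> u}" using Mx_plane[OF Mma] by simp
    have le1: "\<forall>x\<in>Q. a \<bullet> x \<le> a \<bullet> u" using Ma unfolding Mx_def by auto
    have le2: "\<forall>x\<in>Q. a \<bullet> x \<ge> a \<bullet> \<sigma> u" using Mma unfolding Mx_def by auto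
    have sh1: "supporting_hyperplane Q a (a \<bullet> u)" unfolding supporting_hyperplane_def
      using a0 p1 le1 by blast
    have sh2: "supporting_hyperplane Q a (a \<bullet> \<sigma> u)" unfolding supporting_hyperplane_def
      using a0 p2 le2 by blast
    show ?thesis unfolding strictly_antipodal_def
      using u \<sigma>V[OF u] sh1 sh2 p1 p2 unfolding V_def by blast
  qed
  have "locally_point_symmetric Q"
    unfolding locally_point_symmetric_def
  proof (intro exI[of _ "(\<lambda>u. {u, \<sigma> u}) ` V"] conjI ballI)
    show "partition_on (vertices Q) ((\<lambda>u. {u, \<sigma> u}) ` V)"
      unfolding partition_on_def disjoint_def V_def[symmetric]
    proof (intro conjI ballI impI)
      show "\<Union> ((\<lambda>u. {u, \<sigma> u}) ` V) = V" using \<sigma>V by auto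
      show "{} \<notin> (\<lambda>u. {u, \<sigma> u}) ` V" by auto
      fix p p' assume "p \<in> (\<lambda>u. {u, \<sigma> u}) ` V" "p' \<in> (\<lambda>u. {u, \<sigma> u}) ` V" "p \<noteq> p'"
      then obtain u u' where "u \<in> V" "u' \<in> V" "p = {u, \<sigma> u}" "p' = {u', \<sigma> u'}" "p \<noteq> p'" by blast
      then have uu: "u \<in> V" "u' \<in> V" "p = {u, \<sigma> u}" "p' = {u', \<sigma> u'}" "p \<noteq> p'" .
      have "{u, \<sigma> u} = {u', \<sigma> u'}" if "x \<in> {u, \<sigma> u}" "x \<in> {u', \<sigma> u'}" for x
      proof -
        have x1: "x = u \<or> x = \<sigma> u" and x2: "x = u' \<or> x = \<sigma> u'" using that by auto
        have s1: "\<sigma> (\<sigma> u) = u" and s2: "\<sigma> (\<sigma> u') = u'" using \<sigma>\<sigma> uu(1,2) by auto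
        from x1 x2 show ?thesis
        proof (elim disjE)
          assume "x = u" "x = u'" then show ?thesis by simp
        next
          assume "x = u" "x = \<sigma> u'" then have "u = \<sigma> u'" "\<sigma> u = u'" using s2 by auto
          then show ?thesis by (simp add: insert_commute)
        next
          assume "x = \<sigma> u" "x = u'" then have "u' = \<sigma> u" "\<sigma> u' = u" using s1 by auto
          then show ?thesis by (simp add: insert_commute)
        next
          assume "x = \<sigma> u" "x = \<sigma> u'" then have "u = u'" using s1 s2 by metis
          then show ?thesis by simp
        qed
      qed
      then show "p \<inter> p' = {}" using uu by blast
    qed
  next
    fix p assume "p \<in> (\<lambda>u. {u, \<sigma> u}) ` V"
    then obtain u where u: "u \<in> V" "p = {u, \<sigma> u}" by blast
    show "\<exists>u v. p = {u, v} \<and> u \<noteq> v \<and> strictly_antipodal Q u v \<and>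
            (\<lambda>c. c - u) ` supporting_cone Q u = (\<lambda>c. v - c) ` supporting_cone Q v"
    proof (rule exI[of _ u], rule exI[of _ "\<sigma> u"], intro conjI)
      show "p = {u, \<sigma> u}" by (rule u(2))
      show "u \<noteq> \<sigma> u" using \<sigma>ne[OF u(1)] by (rule not_sym)
      show "strictly_antipodal Q u (\<sigma> u)" by (rule anti[OF u(1)])
      show "(\<lambda>c. c - u) ` supporting_cone Q u = (\<lambda>c. \<sigma> u - c) ` supporting_cone Q (\<sigma> u)"
        by (rule cone[OF u(1)])
    qed
  qed
  then show False using assms(3) by blast
qed

end
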